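(* Let $\mathit{VI}$ be a finite set of variables with $\#\mathit{VI}=n$. For all $j,k\in\mathbb{N}$ with $1\le j<k\le n$, we have $\mathit{TSD}_j\subsetneq \mathit{TSD}_k$ (strict inclusion).
   Context: $\mathit{SG}=\wp(\mathit{VI})\setminus\{\emptyset\}$ (the set of sharing groups) and $\mathit{SH}=\wp(\mathit{SG})$, ordered by set inclusion. For $1\le k\le n$, the map $\rho_{\mathit{TSD}_k}:\mathit{SH}\to\mathit{SH}$ is $\rho_{\mathit{TSD}_k}(sh)=\{\,S\in\mathit{SG}\mid \forall T\subseteq S:\ \#T<k\implies S=\bigcup\{U\in sh\mid T\subseteq U\subseteq S\}\,\}$; it is an upper closure operator on $\mathit{SH}$, and $\mathit{TSD}_k=\rho_{\mathit{TSD}_k}(\mathit{SH})$ is its image (set of fixpoints). *)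

theory Defs
  imports Main
begin

definition SG :: "'v set \<Rightarrow> 'v set set" where
  "SG VI = Pow VI - {{}}"

definition SH :: "'v set \<Rightarrow> 'v set set set" where
  "SH VI = Pow (SG VI)"

definition rho_TSD :: "nat \<Rightarrow> 'v set \<Rightarrow> 'v set set \<Rightarrow> 'v set set" where
  "rho_TSD k VI sh =
     {S \<in> SG VI. \<forall>T. T \<subseteq> S \<longrightarrow> card T < k \<longrightarrow>
                    S = \<Union>{U \<in> sh. T \<subseteq> U \<and> U \<subseteq> S}}"

definition TSD :: "nat \<Rightarrow> 'v set \<Rightarrow> 'v set set set" where
  "TSD k VI = rho_TSD k VI ` SH VI"

end

theory Submission
  imports Defs
begin

lemma rho_SG: "rho_TSD k VI sh \<subseteq> SG VI"
  unfolding rho_TSD_def by auto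

lemma rho_ext: assumes "sh \<subseteq> SG VI" shows "sh \<subseteq> rho_TSD k VI sh"
proof
  fix S assume S: "S \<in> sh"
  have "\<forall>T. T \<subseteq> S \<longrightarrow> card T < k \<longrightarrow> S = \<Union>{U \<in> sh. T \<subseteq> U \<and> U \<subseteq> S}"
  proof (intro allI impI)
    fix T assume "T \<subseteq> S"
    then have "S \<in> {U \<in> sh. T \<subseteq> U \<and> U \<subseteq> S}" using S by auto
    then show "S = \<Union>{U \<in> sh. T \<subseteq> U \<and> U \<subseteq> S}" by blast
  qed
  then show "S \<in> rho_TSD k VI sh" using S assms unfolding rho_TSD_def by auto
qed

lemma rho_idem_sub: "rho_TSD k VI (rho_TSD k VI sh) \<subseteq> rho_TSD k VI sh"
proof
  fix S assume S: "S \<in> rho_TSD k VI (rho_TSD k VI sh)"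
  have "\<forall>T. T \<subseteq> S \<longrightarrow> card T < k \<longrightarrow> S = \<Union>{U \<in> sh. T \<subseteq> U \<and> U \<subseteq> S}"
  proof (intro allI impI)
    fix T assume T: "T \<subseteq> S" "card T < k"
    have e: "S = \<Union>{U \<in> rho_TSD k VI sh. T \<subseteq> U \<and> U \<subseteq> S}"
      using S T unfolding rho_TSD_def by blast
    show "S = \<Union>{U \<in> sh. T \<subseteq> U \<and> U \<subseteq> S}"
    proof
      show "\<Union>{U \<in> sh. T \<subseteq> U \<and> U \<subseteq> S} \<subseteq> S" by blast
      show "S \<subseteq> \<Union>{U \<in> sh. T \<subseteq> U \<and> U \<subseteq> S}"
      proof
        fix x assume "x \<in> S"
        with e obtain U where U: "U \<in> rho_TSD k VI sh" "T \<subseteq> U" "U \<subseteq> S" "x \<in> U" by blast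
        then have "U = \<Union>{V \<in> sh. T \<subseteq> V \<and> V \<subseteq> U}" using T unfolding rho_TSD_def by blast
        with U obtain V where "V \<in> sh" "T \<subseteq> V" "V \<subseteq> U" "x \<in> V" by blast
        then show "x \<in> \<Union>{U \<in> sh. T \<subseteq> U \<and> U \<subseteq> S}" using U by blast
      qed
    qed
  qed
  then show "S \<in> rho_TSD k VI sh" using S unfolding rho_TSD_def by auto
qed

lemma rho_idem: "rho_TSD k VI (rho_TSD k VI sh) = rho_TSD k VI sh"
  using rho_idem_sub rho_ext[OF rho_SG] by blast

lemma rho_anti: "j \<le> k \<Longrightarrow> rho_TSD k VI sh \<subseteq> rho_TSD j VI sh"
  unfolding rho_TSD_def by auto

lemma TSD_char: "TSD k VI = {X. X \<subseteq> SG VI \<and> rho_TSD k VI X = X}"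
proof
  show "TSD k VI \<subseteq> {X. X \<subseteq> SG VI \<and> rho_TSD k VI X = X}"
    unfolding TSD_def using rho_SG rho_idem by blast
  show "{X. X \<subseteq> SG VI \<and> rho_TSD k VI X = X} \<subseteq> TSD k VI"
    unfolding TSD_def SH_def by (auto intro!: image_eqI)
qed

theorem proposition3p10:
  fixes VI :: "'v set" and n j k :: nat
  assumes "finite VI" and "card VI = n"
    and "1 \<le> j" and "j < k" and "k \<le> n"
  shows "TSD j VI \<subset> TSD k VI"
proof -
  have sub: "TSD j VI \<subseteq> TSD k VI"
  proof
    fix X assume "X \<in> TSD j VI"
    then have X: "X \<subseteq> SG VI" "rho_TSD j VI X = X" unfolding TSD_char by auto
    have "rho_TSD k VI X = X" using rho_anti[of j k VI X] rho_ext[OF X(1), of k] X(2) assms(4) by auto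
    then show "X \<in> TSD k VI" using X unfolding TSD_char by auto
  qed
  obtain A where A: "A \<subseteq> VI" "card A = Suc j"
    using obtain_subset_with_card_n[of "Suc j" VI] assms by auto
  have finA: "finite A" using A assms(1) finite_subset by auto
  define X where "X = {U. U \<subseteq> A \<and> U \<noteq> {} \<and> U \<noteq> A}"
  have XSG: "X \<subseteq> SG VI" unfolding X_def SG_def using A by auto
  have Xk: "rho_TSD k VI X = X"
  proof
    show "X \<subseteq> rho_TSD k VI X" using rho_ext[OF XSG] .
    show "rho_TSD k VI X \<subseteq> X"
    proof
      fix S assume S: "S \<in> rho_TSD k VI X"
      then have Sne: "S \<noteq> {}" unfolding rho_TSD_def SG_def by auto
      have SX: "\<And>T. T \<subseteq> S \<Longrightarrow> card T < k \<Longrightarrow> S = \<Union>{U \<in> X. T \<subseteq> U \<and> U \<subseteq> S}"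
        using S unfolding rho_TSD_def by blast
      have "S = \<Union>{U \<in> X. {} \<subseteq> U \<and> U \<subseteq> S}" using SX[of "{}"] assms by auto
      then have SA: "S \<subseteq> A" unfolding X_def by blast
      show "S \<in> X"
      proof (rule ccontr)
        assume "S \<notin> X"
        then have "S = A" using SA Sne unfolding X_def by auto
        obtain x where x: "x \<in> A" using A by fastforce
        have c: "card (A - {x}) < k" using A x finA assms(4) by auto
        have "A = \<Union>{U \<in> X. A - {x} \<subseteq> U \<and> U \<subseteq> A}" using SX[of "A - {x}"] c \<open>S = A\<close> by auto
        moreover have "\<Union>{U \<in> X. A - {x} \<subseteq> U \<and> U \<subseteq> A} \<subseteq> A - {x}"
        proof
          fix y assume "y \<in> \<Union>{U \<in> X. A - {x} \<subseteq> U \<and> U \<subseteq> A}"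
          then obtain U where U: "U \<in> X" "A - {x} \<subseteq> U" "U \<subseteq> A" "y \<in> U" by blast
          have "x \<notin> U"
          proof
            assume "x \<in> U" then have "U = A" using U by blast
            then show False using U unfolding X_def by auto
          qed
          then show "y \<in> A - {x}" using U by auto
        qed
        ultimately show False using x by blast
      qed
    qed
  qed
  have XinK: "X \<in> TSD k VI" using Xk XSG unfolding TSD_char by auto
  have AinJ: "A \<in> rho_TSD j VI X"
  proof -
    have "A \<in> SG VI" using A unfolding SG_def by auto
    moreover have "\<forall>T. T \<subseteq> A \<longrightarrow> card T < j \<longrightarrow> A = \<Union>{U \<in> X. T \<subseteq> U \<and> U \<subseteq> A}"
    proof (intro allI impI)
      fix T assume T: "T \<subseteq> A" "card T < j"
      show "A = \<Union>{U \<in> X. T \<subseteq> U \<and> U \<subseteq> A}"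
      proof
        show "\<Union>{U \<in> X. T \<subseteq> U \<and> U \<subseteq> A} \<subseteq> A" by blast
        show "A \<subseteq> \<Union>{U \<in> X. T \<subseteq> U \<and> U \<subseteq> A}"
        proof
          fix x assume x: "x \<in> A"
          have fT: "finite T" using T finA finite_subset by auto
          have "card (insert x T) \<le> Suc (card T)" using fT by (simp add: card_insert_if)
          then have "card (insert x T) < card A" using T A by auto
          then have "insert x T \<noteq> A" by auto
          then have "insert x T \<in> X" unfolding X_def using x T by auto
          then show "x \<in> \<Union>{U \<in> X. T \<subseteq> U \<and> U \<subseteq> A}" using x T by blast
        qed
      qed
    qed
    ultimately show ?thesis unfolding rho_TSD_def by blast
  qed
  have "A \<notin> X" unfolding X_def by auto
  then have "X \<notin> TSD j VI" using AinJ unfolding TSD_char by auto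
  then show ?thesis using sub XinK by blast
qed

end
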